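(* Assume (A1)–(A4). There is a constant $K$ independent of $N$ such that $$\mathbb E\Big[\sup_{0\le t\le T}\big|\Phi(t,\bar x^{(N)}(t))-\Psi_N(t,\bar x^{(N)}(t))\big|^2\Big]\le\frac K{N^2}.$$
   Context: For each $N\ge1$: on a complete filtered probability space, $W^0,W_1,\dots,W_N$ are independent 1-d Brownian motions; filtration generated by them and an independent $\mathcal F_0$. Data (independent of $N$): $T>0$, real constants $A,B,Q,R,G,\sigma,\sigma_0$, $a,b,q,r,g:\mathbb R\to\mathbb R$; primes denote derivatives. (A1) $Q,R,G,\sigma\ge0$, $\sigma_0>0$, $R>0$; $a,b,q,r,g$ bounded $C^2$ with bounded first and second derivatives. (A2) $\xi_1,\dots,\xi_N$ i.i.d., $\mathcal F_0$-measurable, fixed common law with finite second moment. (A3) $\exists\varepsilon_0>0$: $|R+\tfrac12r''(v)+yb''(v)|\ge\varepsilon_0$ for all $v,y$. $\rho$: the $C^1$ function with bounded derivative with $R\rho(y)+\tfrac12r'(\rho(y))+(B+b'(\rho(y)))y=0$. $P\ge0$ solves $\dot P+2AP+Q-R^{-1}B^2P^2=0$, $P(T)=G$. (A4) $a'(v)P(t)\ge R^{-1}Bb'(v)P(t)^2$, $B^2+Bb'(v)\ge0$ for all $t,v$. $k(t,x,y):=\rho(P(t)x+y)$, $\tilde b(t,x,y):=b(k(t,x,y))$. For $\theta\ge0$ let $\mathcal L_\theta$ denote the PDE $\partial_tF+\partial_xF[Ax+a(x)+Bk(t,x,F)+\tilde b(t,x,F)]+P(t)[a(x)+R^{-1}B^2P(t)x+Bk(t,x,F)+\tilde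 b(t,x,F)+a'(x)x]+\tfrac12(\theta+\sigma_0^2)\partial_{xx}F+\tfrac12q'(x)+(A+a'(x))F=0$ on $[0,T)\times\mathbb R$, $F(T,x)=\tfrac12g'(x)$. $\Phi$ is the unique $C^{1,2}$ solution of $\mathcal L_0$ with bounded $\partial_x\Phi,\partial_{xx}\Phi$; $\Psi_N$ is the unique $C^{1,2}$ solution of $\mathcal L_{\sigma^2/N}$ with bounded $\partial_x\Psi_N,\partial_{xx}\Psi_N$. $\bar x^{(N)}$ is the forward component of the uniquely solvable FBSDE (HN): $d\bar x^{(N)}=\{A\bar x^{(N)}+a(\bar x^{(N)})+Bk(t,\bar x^{(N)},\psi)+\tilde b(t,\bar x^{(N)},\psi)\}dt+\frac{\sigma}{N}\sum_idW_i+\sigma_0dW^0$, $\bar x^{(N)}(0)=\frac1N\sum_i\xi_i$; $d\psi=-\{P(t)[a(\bar x^{(N)})+R^{-1}B^2P(t)\bar x^{(N)}+Bk(t,\bar x^{(N)},\psi)+\tilde b(t,\bar x^{(N)},\psi)+a'(\bar x^{(N)})\bar x^{(N)}]+\tfrac12q'(\bar x^{(N)})+(A+a'(\bar x^{(N)}))\psi\}dt+\sum_j\Upsilon_jdW_j+\Upsilon_0dW^0$, $\psi(T)=\tfrac12g'(\bar x^{(N)}(T))$; one has $\psi(t)=\Psi_N(t,\bar x^{(N)}(t))$. *)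

theory Defs
  imports "HOL-Probability.Probability"
begin

definition bdd_C2 :: "(real \<Rightarrow> real) \<Rightarrow> bool" where
  "bdd_C2 f \<longleftrightarrow> (\<forall>x. f differentiable (at x)) \<and> (\<forall>x. deriv f differentiable (at x))
     \<and> continuous_on UNIV (deriv (deriv f))
     \<and> bounded (range f) \<and> bounded (range (deriv f)) \<and> bounded (range (deriv (deriv f)))"

definition kfun :: "(real \<Rightarrow> real) \<Rightarrow> (real \<Rightarrow> real) \<Rightarrow> real \<Rightarrow> real \<Rightarrow> real \<Rightarrow> real" where
  "kfun \<rho> P t x y = \<rho> (P t * x + y)"

definition driftF :: "real \<Rightarrow> real \<Rightarrow> (real \<Rightarrow> real) \<Rightarrow> (real \<Rightarrow> real) \<Rightarrow> (real \<Rightarrow> real)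
    \<Rightarrow> (real \<Rightarrow> real) \<Rightarrow> real \<Rightarrow> real \<Rightarrow> real \<Rightarrow> real" where
  "driftF A B a b \<rho> P t x y = A * x + a x + B * kfun \<rho> P t x y + b (kfun \<rho> P t x y)"

definition sourceF :: "real \<Rightarrow> real \<Rightarrow> real \<Rightarrow> (real \<Rightarrow> real) \<Rightarrow> (real \<Rightarrow> real) \<Rightarrow> (real \<Rightarrow> real)
    \<Rightarrow> (real \<Rightarrow> real) \<Rightarrow> (real \<Rightarrow> real) \<Rightarrow> real \<Rightarrow> real \<Rightarrow> real \<Rightarrow> real" where
  "sourceF A B R a b q \<rho> P t x y =
     P t * (a x + B\<^sup>2 / R * P t * x + B * kfun \<rho> P t x y + b (kfun \<rho> P t x y) + deriv a x * x)
     + deriv q x / 2 + (A + deriv a x) * y"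

definition pde_sol :: "real \<Rightarrow> real \<Rightarrow> real \<Rightarrow> (real \<Rightarrow> real \<Rightarrow> real \<Rightarrow> real)
    \<Rightarrow> (real \<Rightarrow> real \<Rightarrow> real \<Rightarrow> real) \<Rightarrow> (real \<Rightarrow> real) \<Rightarrow> (real \<Rightarrow> real \<Rightarrow> real) \<Rightarrow> bool" where
  "pde_sol T \<sigma>0 \<theta> dr src g F \<longleftrightarrow>
    (\<exists>Ft Fx Fxx.
      (\<forall>t\<in>{0..<T}. \<forall>x.
          ((\<lambda>s. F s x) has_real_derivative Ft t x) (at t within {0..T})
        \<and> ((\<lambda>y. F t y) has_real_derivative Fx t x) (at x)
        \<and> ((\<lambda>y. Fx t y) has_real_derivative Fxx t x) (at x))
      \<and> continuous_on ({0..T} \<times> UNIV) (\<lambda>p. F (fst p) (snd p))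
      \<and> continuous_on ({0..<T} \<times> UNIV) (\<lambda>p. Ft (fst p) (snd p))
      \<and> continuous_on ({0..<T} \<times> UNIV) (\<lambda>p. Fx (fst p) (snd p))
      \<and> continuous_on ({0..<T} \<times> UNIV) (\<lambda>p. Fxx (fst p) (snd p))
      \<and> bounded ((\<lambda>p. Fx (fst p) (snd p)) ` ({0..<T} \<times> UNIV))
      \<and> bounded ((\<lambda>p. Fxx (fst p) (snd p)) ` ({0..<T} \<times> UNIV))
      \<and> (\<forall>t\<in>{0..<T}. \<forall>x.
          Ft t x + Fx t x * dr t x (F t x) + src t x (F t x) + (\<theta> + \<sigma>0\<^sup>2) / 2 * Fxx t x = 0)
      \<and> (\<forall>x. F T x = deriv g x / 2))"

definition brownian_motion :: "'a measure \<Rightarrow> (real \<Rightarrow> 'a \<Rightarrow> real) \<Rightarrow> bool" where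
  "brownian_motion M W \<longleftrightarrow>
     (\<forall>t\<ge>0. W t \<in> borel_measurable M)
   \<and> (\<forall>\<omega>\<in>space M. W 0 \<omega> = 0 \<and> continuous_on {0..} (\<lambda>t. W t \<omega>))
   \<and> (\<forall>s t. 0 \<le> s \<and> s < t \<longrightarrow>
        distributed M lborel (\<lambda>\<omega>. W t \<omega> - W s \<omega>) (normal_density 0 (sqrt (t - s))))
   \<and> (\<forall>(n::nat) ts. 0 \<le> ts 0 \<and> (\<forall>i<n. ts i < ts (Suc i)) \<longrightarrow>
        prob_space.indep_vars M (\<lambda>_. borel) (\<lambda>i \<omega>. W (ts (Suc i)) \<omega> - W (ts i) \<omega>) {..<n})"

definition proc_sigma :: "'a measure \<Rightarrow> (real \<Rightarrow> 'a \<Rightarrow> real) \<Rightarrow> 'a set set" where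
  "proc_sigma M W = sigma_sets (space M) (\<Union>t\<in>{0..}. {W t -` A \<inter> space M | A. A \<in> sets borel})"

definition rv_sigma :: "'a measure \<Rightarrow> ('a \<Rightarrow> real) \<Rightarrow> 'a set set" where
  "rv_sigma M X = sigma_sets (space M) {X -` A \<inter> space M | A. A \<in> sets borel}"

end

theory Submission
  imports Defs
begin


lemma lip_from_deriv:
  fixes f f' :: "real \<Rightarrow> real"
  assumes d: "\<And>x. (f has_real_derivative f' x) (at x)" and b: "\<And>x. \<bar>f' x\<bar> \<le> K"
  shows "\<bar>f x - f y\<bar> \<le> K * \<bar>x - y\<bar>"
proof -
  have *: "\<bar>f v - f u\<bar> \<le> K * \<bar>v - u\<bar>" if uv: "u < v" for u v
  proof -
    obtain z where "f v - f u = (v - u) * f' z" using MVT2[of u v f f'] uv d by blast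
    then have "\<bar>f v - f u\<bar> = \<bar>v - u\<bar> * \<bar>f' z\<bar>" by (simp add: abs_mult)
    also have "\<dots> \<le> \<bar>v - u\<bar> * K" by (rule mult_left_mono[OF b]) simp
    finally show ?thesis by (simp add: mult.commute)
  qed
  show ?thesis
    using *[of x y] *[of y x] by (cases x y rule: linorder_cases) (auto simp: abs_minus_commute)
qed

lemma deriv_within_le0:
  fixes h :: "real \<Rightarrow> real"
  assumes d: "(h has_real_derivative D) (at t0 within {0..T})" and t0: "0 \<le> t0" "t0 < T"
    and le: "\<And>t. t \<in> {t0..T} \<Longrightarrow> h t \<le> h t0"
  shows "D \<le> 0"
proof -
  have "(h has_real_derivative D) (at t0 within {t0..T})"
    using has_field_derivative_subset[OF d] t0 by auto
  then have lim: "((\<lambda>y. (h y - h t0) / (y - t0)) \<longlongrightarrow> D) (at_right t0)"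
    using has_field_derivative_iff at_within_Icc_at_right[OF t0(2)] by metis
  have ev: "eventually (\<lambda>y. 0 \<ge> (h y - h t0) / (y - t0)) (at_right t0)"
    unfolding eventually_at_right[OF t0(2)]
  proof (intro exI[of _ T] conjI ballI allI impI)
    fix y assume "t0 < y" "y < T"
    then have "h y - h t0 \<le> 0" using le[of y] by auto
    then show "(h y - h t0) / (y - t0) \<le> 0" using \<open>t0 < y\<close> by (simp add: divide_nonpos_pos)
  qed (use t0 in auto)
  show ?thesis by (rule tendsto_upperbound[OF lim ev]) simp
qed

lemma second_deriv_max:
  fixes g g' :: "real \<Rightarrow> real"
  assumes dg: "\<And>x. (g has_real_derivative g' x) (at x)"
    and dg': "(g' has_real_derivative l) (at x0)" and g0: "g' x0 = 0"
    and mx: "\<And>x. g x \<le> g x0"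
  shows "l \<le> 0"
proof (rule ccontr)
  assume "\<not> l \<le> 0"
  then obtain d where d: "d > 0" "\<And>h. h > 0 \<Longrightarrow> h < d \<Longrightarrow> g' x0 < g' (x0 + h)"
    using DERIV_pos_inc_right[OF dg'] by force
  have "x0 < x0 + d/2" using d by simp
  then obtain z where z: "x0 < z" "z < x0 + d/2" "g (x0 + d/2) - g x0 = (x0 + d/2 - x0) * g' z"
    using MVT2[of x0 "x0 + d/2" g g'] dg by blast
  have "g' x0 < g' (x0 + (z - x0))" using d(2)[of "z - x0"] z by auto
  then have "g' z > 0" using g0 by simp
  then have "(x0 + d/2 - x0) * g' z > 0" using d by simp
  then have "g (x0 + d/2) - g x0 > 0" using z(3) by linarith
  then show False using mx[of "x0 + d/2"] by simp
qed



lemma maxprin: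
  fixes U Ut Ux Uxx \<beta> :: "real \<Rightarrow> real \<Rightarrow> real"
  assumes T: "T > 0" and nu: "\<nu> \<ge> 0" and L: "L \<ge> 0" and c: "c \<ge> 0" and Cb: "Cb \<ge> 0"
  and dU: "\<And>t x. t \<in> {0..<T} \<Longrightarrow> ((\<lambda>s. U s x) has_real_derivative Ut t x) (at t within {0..T})
        \<and> ((\<lambda>y. U t y) has_real_derivative Ux t x) (at x) \<and> ((\<lambda>y. Ux t y) has_real_derivative Uxx t x) (at x)"
  and cont: "continuous_on ({0..T} \<times> UNIV) (\<lambda>p. U (fst p) (snd p))"
  and Uxb: "\<And>t x. t \<in> {0..<T} \<Longrightarrow> \<bar>Ux t x\<bar> \<le> Cx"
  and UT: "\<And>x. U T x \<le> 0"
  and \<beta>b: "\<And>t x. t \<in> {0..<T} \<Longrightarrow> \<bar>\<beta> t x\<bar> \<le> Cb * (1 + \<bar>x\<bar>)"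
  and ineq: "\<And>t x. t \<in> {0..<T} \<Longrightarrow> Ut t x + Ux t x * \<beta> t x + \<nu>/2 * Uxx t x + L * \<bar>U t x\<bar> \<ge> -c"
  and tt: "t \<in> {0..T}"
  shows "U t x \<le> c * (T - t + 1) * exp (L * (T - t))"
proof -
  define \<phi> where "\<phi> t = c * (T - t + 1) * exp (L * (T - t))" for t
  define \<mu> where "\<mu> = 4 * Cb + \<nu> + L + 1"
  have mu: "\<mu> > 0" using Cb nu L unfolding \<mu>_def by simp
  have phi0: "\<phi> s \<ge> 0" if "s \<le> T" for s using c that unfolding \<phi>_def by simp
  have dphi: "(\<phi> has_real_derivative (- c * exp (L * (T - s)) - L * \<phi> s)) (at s)" for s
    unfolding \<phi>_def by (rule derivative_eq_intros refl | simp add: algebra_simps)+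
  have Cx: "Cx \<ge> 0" using Uxb[of 0 0] T by auto
  obtain Cu where Cu: "Cu \<ge> 0" "\<And>s. s \<in> {0..T} \<Longrightarrow> \<bar>U s 0\<bar> \<le> Cu"
  proof -
    have "continuous_on {0..T} (\<lambda>s. (\<lambda>p. U (fst p) (snd p)) ((\<lambda>s. (s, 0::real)) s))"
      by (rule continuous_on_compose2[OF cont]) (auto intro!: continuous_intros)
    then have "continuous_on {0..T} (\<lambda>s. U s 0)" by simp
    then have "bounded ((\<lambda>s. U s 0) ` {0..T})"
      by (intro compact_imp_bounded compact_continuous_image) auto
    then obtain a where "\<forall>y\<in>(\<lambda>s. U s 0) ` {0..T}. norm y \<le> a" by (auto simp: bounded_iff)
    then have "\<And>s. s \<in> {0..T} \<Longrightarrow> \<bar>U s 0\<bar> \<le> max a 0" by force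
    then show ?thesis using that[of "max a 0"] by auto
  qed
  have grow: "U s y \<le> Cu + Cx * \<bar>y\<bar>" if "s \<in> {0..T}" for s y
  proof (cases "s = T")
    case True
    have "Cx * \<bar>y\<bar> \<ge> 0" using Cx by simp
    then show ?thesis using True UT[of y] Cu(1) by simp
  next
    case False
    then have s: "s \<in> {0..<T}" using that by auto
    have "\<bar>U s y - U s 0\<bar> \<le> Cx * \<bar>y - 0\<bar>"
      by (rule lip_from_deriv[of "\<lambda>y. U s y" "Ux s"]) (use dU[OF s] Uxb[OF s] in auto)
    then show ?thesis using Cu(2)[OF that] by simp
  qed
  have mainA: "U s y \<le> \<phi> s + \<delta> * exp (\<mu> * (T - s)) * (1 + y\<^sup>2)"
    if dl: "\<delta> > 0" and s: "s \<in> {0..T}" for \<delta> s y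
  proof (rule ccontr)
    define W where "W t x = U t x - \<phi> t - \<delta> * exp (\<mu> * (T - t)) * (1 + x\<^sup>2)" for t x
    define Z where "Z p = exp (L * fst p) * W (fst p) (snd p)" for p
    assume "\<not> ?thesis"
    then have W1: "W s y > 0" unfolding W_def by simp
    have Wb: "W t x \<le> Cu + Cx * \<bar>x\<bar> - \<delta> * (1 + x\<^sup>2)" if "t \<in> {0..T}" for t x
    proof -
      have "exp (\<mu> * (T - t)) \<ge> 1" using that mu by simp
      then have "\<delta> * exp (\<mu> * (T - t)) * (1 + x\<^sup>2) \<ge> \<delta> * 1 * (1 + x\<^sup>2)"
        using dl by (intro mult_right_mono mult_left_mono) auto
      then show ?thesis using grow[OF that, of x] phi0[of t] that unfolding W_def by auto
    qed
    define R0 where "R0 = max \<bar>y\<bar> (max 1 ((Cu + Cx) / \<delta>))"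
    have Wneg: "W t x < 0" if "t \<in> {0..T}" "\<bar>x\<bar> > R0" for t x
    proof -
      have x1: "\<bar>x\<bar> \<ge> 1" and x2: "\<bar>x\<bar> > (Cu + Cx) / \<delta>" using that unfolding R0_def by auto
      have "\<delta> * \<bar>x\<bar> > Cu + Cx" using x2 dl by (simp add: field_simps)
      then have "\<delta> * \<bar>x\<bar> * \<bar>x\<bar> > (Cu + Cx) * \<bar>x\<bar>" using x1
        by (intro mult_strict_right_mono) auto
      moreover have "(Cu + Cx) * \<bar>x\<bar> \<ge> Cu + Cx * \<bar>x\<bar>" using x1 Cu Cx
        by (simp add: algebra_simps) (metis mult.commute mult_le_cancel_left1 linorder_not_le)
      moreover have "\<bar>x\<bar> * \<bar>x\<bar> = x\<^sup>2" by (simp add: power2_eq_square abs_mult_self_eq)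
      ultimately show ?thesis using Wb[OF that(1), of x] dl
        by (simp add: algebra_simps)
    qed
    define S where "S = {0..T} \<times> {-R0..R0}"
    have contW: "continuous_on ({0..T} \<times> UNIV) (\<lambda>p. W (fst p) (snd p))"
      unfolding W_def by (intro continuous_intros cont) (simp_all add: \<phi>_def, intro continuous_intros)
    have contZ: "continuous_on S Z"
      unfolding Z_def S_def
      by (intro continuous_intros continuous_on_subset[OF contW]) auto
    have "compact S" unfolding S_def by (intro compact_Times compact_Icc)
    moreover have sy: "(s, y) \<in> S" using s unfolding S_def R0_def by auto
    ultimately obtain p0 where p0: "p0 \<in> S" "\<And>p. p \<in> S \<Longrightarrow> Z p \<le> Z p0"
      using continuous_attains_sup[of S Z] contZ by blast
    obtain t0 x0 where p0e: "p0 = (t0, x0)" by (cases p0)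
    have t0: "t0 \<in> {0..T}" and x0R: "\<bar>x0\<bar> \<le> R0" using p0 p0e unfolding S_def by auto
    have "Z (s, y) > 0" unfolding Z_def using W1 by simp
    then have Zpos: "Z (t0, x0) > 0" using p0(2)[OF sy] p0e by simp
    then have W0: "W t0 x0 > 0" unfolding Z_def by (simp add: zero_less_mult_iff)
    have glob: "Z (t, x) \<le> Z (t0, x0)" if "t \<in> {0..T}" for t x
    proof (cases "\<bar>x\<bar> \<le> R0")
      case True then show ?thesis using p0(2)[of "(t,x)"] p0e that unfolding S_def by (auto simp: abs_le_iff)
    next
      case False
      then have "W t x < 0" using Wneg that by auto
      then have "Z (t, x) < 0" unfolding Z_def by (simp add: mult_pos_neg)
      then show ?thesis using Zpos by simp
    qed
    have tT: "t0 < T"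
    proof (rule ccontr)
      assume "\<not> t0 < T" then have "t0 = T" using t0 by auto
      moreover have "W T x0 < 0"
      proof -
        have "\<delta> * (1 + x0\<^sup>2) > 0" using dl by (simp add: add_pos_nonneg)
        then show ?thesis unfolding W_def using UT[of x0] phi0[of T] by simp
      qed
      ultimately show False using W0 by simp
    qed
    then have t0': "t0 \<in> {0..<T}" using t0 by auto
    define E where "E = exp (\<mu> * (T - t0))"
    have E1: "E \<ge> 1" unfolding E_def using tT mu by simp
    define q where "q = 1 + x0\<^sup>2"
    have q1: "q \<ge> 1" unfolding q_def by simp
    define Y where "Y = \<delta> * E * q"
    have Ypos: "Y > 0" unfolding Y_def using dl E1 q1 by simp
    have gmax: "W t0 x \<le> W t0 x0" for x
      using glob[OF t0, of x] unfolding Z_def by simp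
    have dg: "((\<lambda>x. W t0 x) has_real_derivative (Ux t0 x - \<delta> * E * (2 * x))) (at x)" for x
      unfolding W_def E_def
      using dU[OF t0', of x] by (auto intro!: derivative_eq_intros simp: power2_eq_square)
    have Ux0: "Ux t0 x0 - \<delta> * E * (2 * x0) = 0"
      using DERIV_local_max[OF dg[of x0], of 1] gmax by auto
    have dg': "((\<lambda>x. Ux t0 x - \<delta> * E * (2 * x)) has_real_derivative (Uxx t0 x0 - \<delta> * E * 2)) (at x0)"
      using dU[OF t0', of x0] by (auto intro!: derivative_eq_intros)
    have Uxx0: "Uxx t0 x0 - \<delta> * E * 2 \<le> 0"
      by (rule second_deriv_max[OF dg dg' Ux0 gmax])
    have dh: "((\<lambda>t. exp (L * t) * W t x0) has_real_derivative
        (exp (L * t0) * L * W t0 x0 + exp (L * t0) * (Ut t0 x0 - (- c * exp (L * (T - t0)) - L * \<phi> t0)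
           + \<delta> * \<mu> * E * q))) (at t0 within {0..T})"
      unfolding W_def E_def q_def
      using dU[OF t0', of x0]
      by (auto intro!: derivative_eq_intros DERIV_subset[OF dphi] simp: algebra_simps)
    have "exp (L * t0) * L * W t0 x0 + exp (L * t0) * (Ut t0 x0 - (- c * exp (L * (T - t0)) - L * \<phi> t0)
           + \<delta> * \<mu> * E * q) \<le> 0"
      by (rule deriv_within_le0[OF dh _ tT]) (use t0 glob in \<open>auto simp: Z_def\<close>)
    then have "exp (L * t0) * (L * W t0 x0 + Ut t0 x0 - (- c * exp (L * (T - t0)) - L * \<phi> t0)
           + \<delta> * \<mu> * E * q) \<le> 0" by (simp add: algebra_simps)
    then have "L * W t0 x0 + Ut t0 x0 - (- c * exp (L * (T - t0)) - L * \<phi> t0)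
           + \<delta> * \<mu> * E * q \<le> 0"
      using exp_gt_zero[of "L * t0"] by (metis mult_le_0_iff not_le)
    then have Ut0: "L * W t0 x0 + Ut t0 x0 + c * exp (L * (T - t0)) + L * \<phi> t0 + \<mu> * Y \<le> 0"
      by (simp add: Y_def algebra_simps)
    have U0: "U t0 x0 = W t0 x0 + \<phi> t0 + Y" unfolding W_def Y_def E_def q_def by simp
    have U0pos: "U t0 x0 > 0" using U0 W0 phi0[of t0] Ypos tT by simp
    have LU: "L * \<bar>U t0 x0\<bar> = L * W t0 x0 + L * \<phi> t0 + L * Y"
      using U0pos U0 by (simp add: algebra_simps)
    have ex1: "exp (L * (T - t0)) \<ge> 1" using L tT by simp
    have cex: "c * exp (L * (T - t0)) \<ge> c" using mult_left_mono[OF ex1 c] by simp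
    have bx: "\<bar>x0\<bar> * (1 + \<bar>x0\<bar>) \<le> 2 * q"
    proof -
      have "\<bar>x0\<bar> \<le> 1 + x0\<^sup>2"
      proof (cases "\<bar>x0\<bar> \<le> 1")
        case True then show ?thesis by (smt (verit) zero_le_power2)
      next
        case False
        then have "\<bar>x0\<bar> * 1 \<le> \<bar>x0\<bar> * \<bar>x0\<bar>" by (intro mult_left_mono) auto
        then show ?thesis by (simp add: power2_eq_square abs_mult_self_eq)
      qed
      then show ?thesis unfolding q_def by (simp add: algebra_simps power2_eq_square abs_mult_self_eq)
    qed
    have Uxbeta: "Ux t0 x0 * \<beta> t0 x0 \<le> 4 * Cb * Y"
    proof -
      have "Ux t0 x0 * \<beta> t0 x0 \<le> \<bar>Ux t0 x0\<bar> * \<bar>\<beta> t0 x0\<bar>" by (simp add: abs_mult[symmetric])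
      also have "\<bar>Ux t0 x0\<bar> = 2 * \<delta> * E * \<bar>x0\<bar>" using Ux0 dl E1 by (simp add: abs_mult)
      also have "2 * \<delta> * E * \<bar>x0\<bar> * \<bar>\<beta> t0 x0\<bar> \<le> 2 * \<delta> * E * \<bar>x0\<bar> * (Cb * (1 + \<bar>x0\<bar>))"
        using \<beta>b[OF t0'] dl E1 by (intro mult_left_mono) auto
      also have "\<dots> = 2 * \<delta> * E * Cb * (\<bar>x0\<bar> * (1 + \<bar>x0\<bar>))" by (simp add: algebra_simps)
      also have "\<dots> \<le> 2 * \<delta> * E * Cb * (2 * q)"
        using bx dl E1 Cb by (intro mult_left_mono) auto
      finally show ?thesis unfolding Y_def by (simp add: algebra_simps)
    qed
    have Uxxb: "\<nu> / 2 * Uxx t0 x0 \<le> \<nu> * Y"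
    proof -
      have "\<nu> / 2 * Uxx t0 x0 \<le> \<nu> / 2 * (\<delta> * E * 2)" using Uxx0 nu by (intro mult_left_mono) auto
      also have "\<dots> = \<nu> * (\<delta> * E) * 1" by simp
      also have "\<dots> \<le> \<nu> * (\<delta> * E) * q" using q1 nu dl E1 by (intro mult_left_mono) auto
      finally show ?thesis unfolding Y_def by (simp add: algebra_simps)
    qed
    have "\<mu> * Y = 4 * Cb * Y + \<nu> * Y + L * Y + Y" unfolding \<mu>_def by (simp add: algebra_simps)
    then show False using ineq[OF t0', of x0] Ut0 LU cex Uxbeta Uxxb Ypos by linarith
  qed
  show ?thesis
  proof (rule field_le_epsilon)
    fix e :: real assume e: "e > 0"
    define \<delta> where "\<delta> = e / (exp (\<mu> * (T - t)) * (1 + x\<^sup>2))"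
    have pos: "exp (\<mu> * (T - t)) * (1 + x\<^sup>2) > 0" by (simp add: add_pos_nonneg)
    have "\<delta> > 0" unfolding \<delta>_def using e pos by simp
    moreover have "\<delta> * exp (\<mu> * (T - t)) * (1 + x\<^sup>2) = e"
    proof -
      have "(1 + x\<^sup>2) \<noteq> 0" by (metis add_pos_nonneg zero_le_power2 zero_less_one order_less_irrefl)
      then show ?thesis unfolding \<delta>_def by simp
    qed
    ultimately show "U t x \<le> c * (T - t + 1) * exp (L * (T - t)) + e"
      using mainA[OF _ tt, of \<delta> x] unfolding \<phi>_def by simp
  qed
qed


lemma bounded_img2:
  fixes F :: "real \<Rightarrow> real \<Rightarrow> real"
  assumes "bounded ((\<lambda>p. F (fst p) (snd p)) ` ({0..<T} \<times> (UNIV::real set)))"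
  obtains M where "M \<ge> 0" "\<And>t x. t \<in> {0..<T} \<Longrightarrow> \<bar>F t x\<bar> \<le> M"
proof -
  obtain a where a: "\<forall>y\<in>(\<lambda>p. F (fst p) (snd p)) ` ({0..<T} \<times> (UNIV::real set)). norm y \<le> a"
    using assms by (auto simp: bounded_iff)
  have "\<bar>F t x\<bar> \<le> max a 0" if "t \<in> {0..<T}" for t x
    using a that by (force intro: order_trans[OF _ max.cobounded1])
  then show ?thesis using that[of "max a 0"] by auto
qed

lemma bounded_slice:
  fixes F :: "real \<Rightarrow> real \<Rightarrow> real"
  assumes "continuous_on ({0..T} \<times> UNIV) (\<lambda>p. F (fst p) (snd p))"
  obtains M where "M \<ge> 0" "\<And>t. t \<in> {0..T} \<Longrightarrow> \<bar>F t 0\<bar> \<le> M"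
proof -
  have "continuous_on {0..T} (\<lambda>s. (\<lambda>p. F (fst p) (snd p)) ((\<lambda>s. (s, 0::real)) s))"
    by (rule continuous_on_compose2[OF assms]) (auto intro!: continuous_intros)
  then have "continuous_on {0..T} (\<lambda>s. F s 0)" by simp
  then have "bounded ((\<lambda>s. F s 0) ` {0..T})"
    by (intro compact_imp_bounded compact_continuous_image) auto
  then obtain a where "\<forall>y\<in>(\<lambda>s. F s 0) ` {0..T}. norm y \<le> a" by (auto simp: bounded_iff)
  then have "\<And>s. s \<in> {0..T} \<Longrightarrow> \<bar>F s 0\<bar> \<le> max a 0" by force
  then show ?thesis using that[of "max a 0"] by auto
qed

lemma compare:
  fixes dr src :: "real \<Rightarrow> real \<Rightarrow> real \<Rightarrow> real" and \<Phi> Ft Fx Fxx \<Psi> :: "real \<Rightarrow> real \<Rightarrow> real"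
  assumes T: "T > 0" and th: "\<theta> \<ge> 0"
  and dF: "\<And>t x. t \<in> {0..<T} \<Longrightarrow> ((\<lambda>s. \<Phi> s x) has_real_derivative Ft t x) (at t within {0..T})
        \<and> ((\<lambda>y. \<Phi> t y) has_real_derivative Fx t x) (at x) \<and> ((\<lambda>y. Fx t y) has_real_derivative Fxx t x) (at x)"
  and cF: "continuous_on ({0..T} \<times> UNIV) (\<lambda>p. \<Phi> (fst p) (snd p))"
  and M1: "\<And>t x. t \<in> {0..<T} \<Longrightarrow> \<bar>Fx t x\<bar> \<le> M1"
  and M2: "\<And>t x. t \<in> {0..<T} \<Longrightarrow> \<bar>Fxx t x\<bar> \<le> M2"
  and eqF: "\<And>t x. t \<in> {0..<T} \<Longrightarrow>
      Ft t x + Fx t x * dr t x (\<Phi> t x) + src t x (\<Phi> t x) + (0 + \<sigma>0\<^sup>2) / 2 * Fxx t x = 0"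
  and TF: "\<And>x. \<Phi> T x = deriv g x / 2"
  and Psi: "pde_sol T \<sigma>0 \<theta> dr src g \<Psi>"
  and Lf: "Lf \<ge> 0" "\<And>t x y1 y2. t \<in> {0..<T} \<Longrightarrow> \<bar>dr t x y1 - dr t x y2\<bar> \<le> Lf * \<bar>y1 - y2\<bar>"
  and Ls: "Ls \<ge> 0" "\<And>t x y1 y2. t \<in> {0..<T} \<Longrightarrow> \<bar>src t x y1 - src t x y2\<bar> \<le> Ls * \<bar>y1 - y2\<bar>"
  and Cd: "Cd \<ge> 0" "\<And>t x y. t \<in> {0..<T} \<Longrightarrow> \<bar>dr t x y\<bar> \<le> Cd * (1 + \<bar>x\<bar> + \<bar>y\<bar>)"
  and tt: "t \<in> {0..T}"
  shows "\<bar>\<Phi> t x - \<Psi> t x\<bar> \<le> \<theta> / 2 * M2 * (T + 1) * exp ((M1 * Lf + Ls) * T)"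
proof -
  obtain Gt Gx Gxx where
    dG: "\<And>t x. t \<in> {0..<T} \<Longrightarrow> ((\<lambda>s. \<Psi> s x) has_real_derivative Gt t x) (at t within {0..T})
        \<and> ((\<lambda>y. \<Psi> t y) has_real_derivative Gx t x) (at x) \<and> ((\<lambda>y. Gx t y) has_real_derivative Gxx t x) (at x)"
    and cG: "continuous_on ({0..T} \<times> UNIV) (\<lambda>p. \<Psi> (fst p) (snd p))"
    and bG: "bounded ((\<lambda>p. Gx (fst p) (snd p)) ` ({0..<T} \<times> UNIV))"
    and eqG: "\<And>t x. t \<in> {0..<T} \<Longrightarrow>
      Gt t x + Gx t x * dr t x (\<Psi> t x) + src t x (\<Psi> t x) + (\<theta> + \<sigma>0\<^sup>2) / 2 * Gxx t x = 0"
    and TG: "\<And>x. \<Psi> T x = deriv g x / 2"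
    using Psi unfolding pde_sol_def by blast
  obtain G1 where G1: "G1 \<ge> 0" "\<And>t x. t \<in> {0..<T} \<Longrightarrow> \<bar>Gx t x\<bar> \<le> G1"
    using bounded_img2[OF bG] by blast
  obtain C\<psi> where Cpsi: "C\<psi> \<ge> 0" "\<And>t. t \<in> {0..T} \<Longrightarrow> \<bar>\<Psi> t 0\<bar> \<le> C\<psi>"
    using bounded_slice[OF cG] by blast
  have M1p: "M1 \<ge> 0" using M1[of 0 0] T by auto
  have M2p: "M2 \<ge> 0" using M2[of 0 0] T by auto
  have psig: "\<bar>\<Psi> s y\<bar> \<le> C\<psi> + G1 * \<bar>y\<bar>" if s: "s \<in> {0..<T}" for s y
  proof -
    have "\<bar>\<Psi> s y - \<Psi> s 0\<bar> \<le> G1 * \<bar>y - 0\<bar>"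
      by (rule lip_from_deriv[of "\<lambda>y. \<Psi> s y" "Gx s"]) (use dG[OF s] G1(2)[OF s] in auto)
    then show ?thesis using Cpsi(2)[of s] s by auto
  qed
  define \<beta> where "\<beta> s y = dr s y (\<Psi> s y)" for s y
  define Cb where "Cb = Cd * (1 + C\<psi> + G1)"
  have Cb: "Cb \<ge> 0" unfolding Cb_def using Cd Cpsi G1 by simp
  have \<beta>b: "\<bar>\<beta> s y\<bar> \<le> Cb * (1 + \<bar>y\<bar>)" if s: "s \<in> {0..<T}" for s y
  proof -
    have "\<bar>\<beta> s y\<bar> \<le> Cd * (1 + \<bar>y\<bar> + \<bar>\<Psi> s y\<bar>)" unfolding \<beta>_def by (rule Cd(2)[OF s])
    also have "\<dots> \<le> Cd * (1 + \<bar>y\<bar> + (C\<psi> + G1 * \<bar>y\<bar>))"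
      using psig[OF s, of y] Cd(1) by (intro mult_left_mono) auto
    also have "\<dots> \<le> Cb * (1 + \<bar>y\<bar>)"
    proof -
      have "1 + \<bar>y\<bar> + (C\<psi> + G1 * \<bar>y\<bar>) \<le> (1 + C\<psi> + G1) * (1 + \<bar>y\<bar>)"
        using Cpsi(1) G1(1) by (simp add: algebra_simps)
      then show ?thesis unfolding Cb_def using Cd(1)
        by (simp add: mult.assoc mult_left_mono)
    qed
    finally show ?thesis .
  qed
  define L where "L = M1 * Lf + Ls"
  define c where "c = \<theta> / 2 * M2"
  define \<nu> where "\<nu> = \<theta> + \<sigma>0\<^sup>2"
  have Lp: "L \<ge> 0" unfolding L_def using M1p Lf Ls by simp
  have cp: "c \<ge> 0" unfolding c_def using th M2p by simp
  have nup: "\<nu> \<ge> 0" unfolding \<nu>_def using th by simp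
  have contU: "continuous_on ({0..T} \<times> UNIV) (\<lambda>p. \<Phi> (fst p) (snd p) - \<Psi> (fst p) (snd p))"
    by (intro continuous_on_diff cF cG)
  have contV: "continuous_on ({0..T} \<times> UNIV) (\<lambda>p. \<Psi> (fst p) (snd p) - \<Phi> (fst p) (snd p))"
    by (intro continuous_on_diff cF cG)
  have key: "(Ft s y - Gt s y) + (Fx s y - Gx s y) * \<beta> s y + \<nu>/2 * (Fxx s y - Gxx s y)
      = - Fx s y * (dr s y (\<Phi> s y) - dr s y (\<Psi> s y)) - (src s y (\<Phi> s y) - src s y (\<Psi> s y))
        + \<theta>/2 * Fxx s y" if s: "s \<in> {0..<T}" for s y
  proof -
    have e1: "Ft s y + Fx s y * dr s y (\<Phi> s y) + src s y (\<Phi> s y) + \<sigma>0\<^sup>2 / 2 * Fxx s y = 0"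
      using eqF[OF s, of y] by simp
    have e2: "\<nu>/2 * (Fxx s y - Gxx s y) = \<theta>/2 * Fxx s y + \<sigma>0\<^sup>2 / 2 * Fxx s y
        - (\<theta> + \<sigma>0\<^sup>2) / 2 * Gxx s y" unfolding \<nu>_def by (simp add: field_simps)
    have e3: "(Fx s y - Gx s y) * \<beta> s y = Fx s y * dr s y (\<Psi> s y) - Gx s y * dr s y (\<Psi> s y)"
      unfolding \<beta>_def by (simp add: algebra_simps)
    have e4: "- Fx s y * (dr s y (\<Phi> s y) - dr s y (\<Psi> s y)) = - (Fx s y * dr s y (\<Phi> s y)) + Fx s y * dr s y (\<Psi> s y)"
      by (simp add: algebra_simps)
    show ?thesis using e1 e2 e3 e4 eqG[OF s, of y] by linarith
  qed
  have errb: "\<bar>- Fx s y * (dr s y (\<Phi> s y) - dr s y (\<Psi> s y)) - (src s y (\<Phi> s y) - src s y (\<Psi> s y))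
        + \<theta>/2 * Fxx s y\<bar> \<le> L * \<bar>\<Phi> s y - \<Psi> s y\<bar> + c" if s: "s \<in> {0..<T}" for s y
  proof -
    have a1: "\<bar>Fx s y * (dr s y (\<Phi> s y) - dr s y (\<Psi> s y))\<bar> \<le> M1 * (Lf * \<bar>\<Phi> s y - \<Psi> s y\<bar>)"
      unfolding abs_mult using M1[OF s, of y] Lf(2)[OF s, of y] M1p
      by (intro mult_mono) auto
    have a2: "\<bar>src s y (\<Phi> s y) - src s y (\<Psi> s y)\<bar> \<le> Ls * \<bar>\<Phi> s y - \<Psi> s y\<bar>" by (rule Ls(2)[OF s])
    have a3: "\<bar>\<theta>/2 * Fxx s y\<bar> \<le> c"
    proof -
      have "\<bar>\<theta>/2 * Fxx s y\<bar> = \<theta>/2 * \<bar>Fxx s y\<bar>" using th by (simp add: abs_mult)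
      also have "\<dots> \<le> \<theta>/2 * M2" using M2[OF s, of y] th by (intro mult_left_mono) auto
      finally show ?thesis unfolding c_def .
    qed
    show ?thesis using a1 a2 a3 unfolding L_def by (simp add: algebra_simps)
  qed
  have up: "\<Phi> t x - \<Psi> t x \<le> c * (T - t + 1) * exp (L * (T - t))"
  proof (rule maxprin[where U = "\<lambda>t x. \<Phi> t x - \<Psi> t x" and Ut = "\<lambda>t x. Ft t x - Gt t x"
        and Ux = "\<lambda>t x. Fx t x - Gx t x" and Uxx = "\<lambda>t x. Fxx t x - Gxx t x" and \<beta> = \<beta>
        and Cx = "M1 + G1", OF T nup Lp cp Cb _ contU _ _ \<beta>b _ tt])
    fix s y assume s: "s \<in> {0..<T}"
    show "((\<lambda>sa. \<Phi> sa y - \<Psi> sa y) has_real_derivative Ft s y - Gt s y) (at s within {0..T}) \<and>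
          ((\<lambda>ya. \<Phi> s ya - \<Psi> s ya) has_real_derivative Fx s y - Gx s y) (at y) \<and>
          ((\<lambda>ya. Fx s ya - Gx s ya) has_real_derivative Fxx s y - Gxx s y) (at y)"
      using dF[OF s, of y] dG[OF s, of y] by (auto intro!: derivative_intros)
    show "\<bar>Fx s y - Gx s y\<bar> \<le> M1 + G1" using M1[OF s, of y] G1(2)[OF s, of y] by linarith
    show "- c \<le> Ft s y - Gt s y + (Fx s y - Gx s y) * \<beta> s y + \<nu> / 2 * (Fxx s y - Gxx s y)
               + L * \<bar>\<Phi> s y - \<Psi> s y\<bar>"
      using key[OF s, of y] errb[OF s, of y] by linarith
  next
    fix y show "\<Phi> T y - \<Psi> T y \<le> 0" using TF[of y] TG[of y] by linarith
  qed
  have dn: "\<Psi> t x - \<Phi> t x \<le> c * (T - t + 1) * exp (L * (T - t))"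
  proof (rule maxprin[where U = "\<lambda>t x. \<Psi> t x - \<Phi> t x" and Ut = "\<lambda>t x. Gt t x - Ft t x"
        and Ux = "\<lambda>t x. Gx t x - Fx t x" and Uxx = "\<lambda>t x. Gxx t x - Fxx t x" and \<beta> = \<beta>
        and Cx = "M1 + G1", OF T nup Lp cp Cb _ contV _ _ \<beta>b _ tt])
    fix s y assume s: "s \<in> {0..<T}"
    show "((\<lambda>sa. \<Psi> sa y - \<Phi> sa y) has_real_derivative Gt s y - Ft s y) (at s within {0..T}) \<and>
          ((\<lambda>ya. \<Psi> s ya - \<Phi> s ya) has_real_derivative Gx s y - Fx s y) (at y) \<and>
          ((\<lambda>ya. Gx s ya - Fx s ya) has_real_derivative Gxx s y - Fxx s y) (at y)"
      using dF[OF s, of y] dG[OF s, of y] by (auto intro!: derivative_intros)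
    show "\<bar>Gx s y - Fx s y\<bar> \<le> M1 + G1" using M1[OF s, of y] G1(2)[OF s, of y] by linarith
    have "L * \<bar>\<Psi> s y - \<Phi> s y\<bar> = L * \<bar>\<Phi> s y - \<Psi> s y\<bar>" by (simp add: abs_minus_commute)
    moreover have "Gt s y - Ft s y + (Gx s y - Fx s y) * \<beta> s y + \<nu> / 2 * (Gxx s y - Fxx s y)
       = - ((Ft s y - Gt s y) + (Fx s y - Gx s y) * \<beta> s y + \<nu>/2 * (Fxx s y - Gxx s y))"
      by (simp add: algebra_simps)
    ultimately show "- c \<le> Gt s y - Ft s y + (Gx s y - Fx s y) * \<beta> s y + \<nu> / 2 * (Gxx s y - Fxx s y)
               + L * \<bar>\<Psi> s y - \<Phi> s y\<bar>"
      using key[OF s, of y] errb[OF s, of y, unfolded abs_le_iff] by linarith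
  next
    fix y show "\<Psi> T y - \<Phi> T y \<le> 0" using TF[of y] TG[of y] by linarith
  qed
  have "c * (T - t + 1) * exp (L * (T - t)) \<le> \<theta> / 2 * M2 * (T + 1) * exp ((M1 * Lf + Ls) * T)"
  proof -
    have "exp (L * (T - t)) \<le> exp (L * T)" using tt Lp by (simp add: mult_left_mono)
    moreover have "T - t + 1 \<le> T + 1" "0 \<le> T - t + 1" using tt by auto
    ultimately have "c * (T - t + 1) * exp (L * (T - t)) \<le> c * (T + 1) * exp (L * T)"
      using cp by (simp add: mult.assoc mult_left_mono mult_mono)
    then show ?thesis unfolding c_def L_def .
  qed
  then show ?thesis using up dn unfolding abs_le_iff by linarith
qed


lemma bnd_range:
  fixes f :: "real \<Rightarrow> real"
  assumes "bounded (range f)"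
  obtains M where "M \<ge> 0" "\<And>x. \<bar>f x\<bar> \<le> M"
proof -
  obtain a where a: "\<forall>y\<in>range f. norm y \<le> a" using assms by (auto simp: bounded_iff)
  have "\<bar>f x\<bar> \<le> max a 0" for x using a by (force intro: order_trans[OF _ max.cobounded1])
  then show ?thesis using that[of "max a 0"] by auto
qed

theorem mainTheorem14:
  fixes T A B Q R G \<sigma> \<sigma>0 \<epsilon>0 :: real
    and a b q r g \<rho> P :: "real \<Rightarrow> real"
    and \<Phi> :: "real \<Rightarrow> real \<Rightarrow> real"
    and \<Psi> :: "nat \<Rightarrow> real \<Rightarrow> real \<Rightarrow> real"
    and \<mu> :: "real measure"
  assumes hT: "T > 0"
    and A1: "Q \<ge> 0" "R > 0" "G \<ge> 0" "\<sigma> \<ge> 0" "\<sigma>0 > 0"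
            "bdd_C2 a" "bdd_C2 b" "bdd_C2 q" "bdd_C2 r" "bdd_C2 g"
    and A2: "prob_space \<mu>" "sets \<mu> = sets borel" "integrable \<mu> (\<lambda>x. x\<^sup>2)"
    and A3: "\<epsilon>0 > 0" "\<And>v y. \<bar>R + deriv (deriv r) v / 2 + y * deriv (deriv b) v\<bar> \<ge> \<epsilon>0"
    and rho: "\<And>y. \<rho> differentiable (at y)" "continuous_on UNIV (deriv \<rho>)"
             "bounded (range (deriv \<rho>))"
             "\<And>y. R * \<rho> y + deriv r (\<rho> y) / 2 + (B + deriv b (\<rho> y)) * y = 0"
    and Ric: "\<And>t. t \<in> {0..T} \<Longrightarrow>
                (P has_real_derivative (- (2 * A * P t + Q - B\<^sup>2 / R * (P t)\<^sup>2))) (at t within {0..T})"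
             "P T = G" "\<And>t. t \<in> {0..T} \<Longrightarrow> P t \<ge> 0"
    and A4: "\<And>t v. t \<in> {0..T} \<Longrightarrow> deriv a v * P t \<ge> B * deriv b v * (P t)\<^sup>2 / R"
            "\<And>v. B\<^sup>2 + B * deriv b v \<ge> 0"
    and Phi: "pde_sol T \<sigma>0 0 (driftF A B a b \<rho> P) (sourceF A B R a b q \<rho> P) g \<Phi>"
    and Psi: "\<And>N. N \<ge> 1 \<Longrightarrow>
                pde_sol T \<sigma>0 (\<sigma>\<^sup>2 / real N) (driftF A B a b \<rho> P) (sourceF A B R a b q \<rho> P) g (\<Psi> N)"
  shows "\<exists>K. \<forall>N::nat. \<forall>(M::'a measure) W \<xi> X.
           N \<ge> 1 \<and> prob_space M
         \<and> (\<forall>i\<le>N. brownian_motion M (W i))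
         \<and> (\<forall>i\<in>{1..N}. \<xi> i \<in> borel_measurable M \<and> distr M borel (\<xi> i) = \<mu>)
         \<and> prob_space.indep_sets M
             (\<lambda>j. case j of Inl i \<Rightarrow> proc_sigma M (W i) | Inr i \<Rightarrow> rv_sigma M (\<xi> i))
             ({0..N} <+> {1..N})
         \<and> (\<forall>\<omega>\<in>space M. continuous_on {0..T} (\<lambda>t. X t \<omega>)
              \<and> (\<forall>t\<in>{0..T}. X t \<omega> =
                   (\<Sum>i=1..N. \<xi> i \<omega>) / real N
                 + integral {0..t} (\<lambda>s. driftF A B a b \<rho> P s (X s \<omega>) (\<Psi> N s (X s \<omega>)))
                 + \<sigma> / real N * (\<Sum>i=1..N. W i t \<omega>) + \<sigma>0 * W 0 t \<omega>))
         \<longrightarrow> (\<integral>\<^sup>+ \<omega>. (\<Squnion>t\<in>{0..T}. ennreal ((\<Phi> t (X t \<omega>) - \<Psi> N t (X t \<omega>))\<^sup>2)) \<partial>M)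
               \<le> ennreal (K / (real N)\<^sup>2)"
proof -
  have da: "\<And>x. (a has_real_derivative deriv a x) (at x)" and db: "\<And>x. (b has_real_derivative deriv b x) (at x)"
    using A1(6,7) unfolding bdd_C2_def by (auto simp: DERIV_deriv_iff_real_differentiable)
  obtain Ma where Ma: "Ma \<ge> 0" "\<And>x. \<bar>a x\<bar> \<le> Ma" using A1(6) bnd_range unfolding bdd_C2_def by blast
  obtain La where La: "La \<ge> 0" "\<And>x. \<bar>deriv a x\<bar> \<le> La" using A1(6) bnd_range unfolding bdd_C2_def by blast
  obtain Mb where Mb: "Mb \<ge> 0" "\<And>x. \<bar>b x\<bar> \<le> Mb" using A1(7) bnd_range unfolding bdd_C2_def by blast
  obtain Lb where Lb: "Lb \<ge> 0" "\<And>x. \<bar>deriv b x\<bar> \<le> Lb" using A1(7) bnd_range unfolding bdd_C2_def by blast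
  obtain Lr where Lr: "Lr \<ge> 0" "\<And>x. \<bar>deriv \<rho> x\<bar> \<le> Lr" using rho(3) bnd_range by blast
  have drho: "\<And>x. (\<rho> has_real_derivative deriv \<rho> x) (at x)"
    using rho(1) by (simp add: DERIV_deriv_iff_real_differentiable)
  have lipr: "\<bar>\<rho> u - \<rho> v\<bar> \<le> Lr * \<bar>u - v\<bar>" for u v by (rule lip_from_deriv[OF drho Lr(2)])
  have lipb: "\<bar>b u - b v\<bar> \<le> Lb * \<bar>u - v\<bar>" for u v by (rule lip_from_deriv[OF db Lb(2)])
  obtain Pm where Pm: "\<And>t. t \<in> {0..T} \<Longrightarrow> P t \<le> Pm"
  proof -
    have "continuous_on {0..T} P" by (rule DERIV_continuous_on[OF Ric(1)])
    then have "bounded (P ` {0..T})" by (intro compact_imp_bounded compact_continuous_image) auto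
    then obtain m where "\<forall>y\<in>P ` {0..T}. norm y \<le> m" by (auto simp: bounded_iff)
    then show ?thesis using that[of m] by force
  qed
  have Pm0: "Pm \<ge> 0" using Pm[of 0] Ric(3)[of 0] hT by force
  define dr where "dr = driftF A B a b \<rho> P"
  define src where "src = sourceF A B R a b q \<rho> P"
  define Lf where "Lf = (\<bar>B\<bar> + Lb) * Lr"
  define Ls where "Ls = Pm * Lf + \<bar>A\<bar> + La"
  have Lf0: "Lf \<ge> 0" unfolding Lf_def using Lb Lr by simp
  have Ls0: "Ls \<ge> 0" unfolding Ls_def using Pm0 Lf0 La by simp
  have kd: "\<bar>B * \<rho> (P t * x + y1) + b (\<rho> (P t * x + y1)) - (B * \<rho> (P t * x + y2) + b (\<rho> (P t * x + y2)))\<bar>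
      \<le> Lf * \<bar>y1 - y2\<bar>" for t x y1 y2
  proof -
    let ?r1 = "\<rho> (P t * x + y1)" and ?r2 = "\<rho> (P t * x + y2)"
    have r: "\<bar>?r1 - ?r2\<bar> \<le> Lr * \<bar>y1 - y2\<bar>" using lipr[of "P t * x + y1" "P t * x + y2"] by simp
    have "\<bar>B * ?r1 + b ?r1 - (B * ?r2 + b ?r2)\<bar> \<le> \<bar>B\<bar> * \<bar>?r1 - ?r2\<bar> + \<bar>b ?r1 - b ?r2\<bar>"
    proof -
      have "B * ?r1 + b ?r1 - (B * ?r2 + b ?r2) = B * (?r1 - ?r2) + (b ?r1 - b ?r2)" by (simp add: algebra_simps)
      then show ?thesis using abs_triangle_ineq[of "B * (?r1 - ?r2)" "b ?r1 - b ?r2"] by (simp add: abs_mult)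
    qed
    also have "\<dots> \<le> \<bar>B\<bar> * \<bar>?r1 - ?r2\<bar> + Lb * \<bar>?r1 - ?r2\<bar>" using lipb[of ?r1 ?r2] by simp
    also have "\<dots> = (\<bar>B\<bar> + Lb) * \<bar>?r1 - ?r2\<bar>" by (simp add: algebra_simps)
    also have "\<dots> \<le> (\<bar>B\<bar> + Lb) * (Lr * \<bar>y1 - y2\<bar>)" using r Lb by (intro mult_left_mono) auto
    finally show ?thesis unfolding Lf_def by (simp add: mult.assoc)
  qed
  have Lfd: "\<bar>dr t x y1 - dr t x y2\<bar> \<le> Lf * \<bar>y1 - y2\<bar>" for t x y1 y2
  proof -
    have "dr t x y1 - dr t x y2 = B * \<rho> (P t * x + y1) + b (\<rho> (P t * x + y1)) - (B * \<rho> (P t * x + y2) + b (\<rho> (P t * x + y2)))"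
      unfolding dr_def driftF_def kfun_def by simp
    then show ?thesis using kd[of t x y1 y2] by simp
  qed
  have Lsd: "\<bar>src t x y1 - src t x y2\<bar> \<le> Ls * \<bar>y1 - y2\<bar>" if t: "t \<in> {0..<T}" for t x y1 y2
  proof -
    let ?K = "B * \<rho> (P t * x + y1) + b (\<rho> (P t * x + y1)) - (B * \<rho> (P t * x + y2) + b (\<rho> (P t * x + y2)))"
    have "src t x y1 - src t x y2 = P t * ?K + (A + deriv a x) * (y1 - y2)"
      unfolding src_def sourceF_def kfun_def by (simp add: algebra_simps)
    then have "\<bar>src t x y1 - src t x y2\<bar> \<le> \<bar>P t\<bar> * \<bar>?K\<bar> + \<bar>A + deriv a x\<bar> * \<bar>y1 - y2\<bar>"
      using abs_triangle_ineq[of "P t * ?K" "(A + deriv a x) * (y1 - y2)"] by (simp add: abs_mult)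
    also have "\<bar>P t\<bar> * \<bar>?K\<bar> \<le> Pm * (Lf * \<bar>y1 - y2\<bar>)"
      using Pm[of t] Ric(3)[of t] t kd[of t x y1 y2] Pm0 by (intro mult_mono) auto
    also have "\<bar>A + deriv a x\<bar> * \<bar>y1 - y2\<bar> \<le> (\<bar>A\<bar> + La) * \<bar>y1 - y2\<bar>"
      using La(2)[of x] by (intro mult_right_mono) (auto intro: order_trans[OF abs_triangle_ineq])
    finally show ?thesis unfolding Ls_def by (simp add: algebra_simps)
  qed
  define Cd where "Cd = Ma + Mb + \<bar>B\<bar> * \<bar>\<rho> 0\<bar> + \<bar>A\<bar> + \<bar>B\<bar> * Lr * Pm + \<bar>B\<bar> * Lr"
  have Cd0: "Cd \<ge> 0" unfolding Cd_def using Ma Mb Lr Pm0 by simp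
  have Cdd: "\<bar>dr t x y\<bar> \<le> Cd * (1 + \<bar>x\<bar> + \<bar>y\<bar>)" if t: "t \<in> {0..<T}" for t x y
  proof -
    have Pt: "\<bar>P t\<bar> \<le> Pm" using Pm[of t] Ric(3)[of t] t by auto
    have z: "\<bar>P t * x + y\<bar> \<le> Pm * \<bar>x\<bar> + \<bar>y\<bar>"
    proof -
      have "\<bar>P t * x\<bar> \<le> Pm * \<bar>x\<bar>" using mult_right_mono[OF Pt, of "\<bar>x\<bar>"] by (simp add: abs_mult)
      then show ?thesis using abs_triangle_ineq[of "P t * x" y] by linarith
    qed
    have r: "\<bar>\<rho> (P t * x + y)\<bar> \<le> \<bar>\<rho> 0\<bar> + Lr * (Pm * \<bar>x\<bar> + \<bar>y\<bar>)"
      using lipr[of "P t * x + y" 0] mult_left_mono[OF z Lr(1)] by simp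
    have "\<bar>dr t x y\<bar> \<le> \<bar>A\<bar> * \<bar>x\<bar> + Ma + \<bar>B\<bar> * \<bar>\<rho> (P t * x + y)\<bar> + Mb"
      unfolding dr_def driftF_def kfun_def
    proof -
      have t4: "\<bar>u + v + w + z\<bar> \<le> \<bar>u\<bar> + \<bar>v\<bar> + \<bar>w\<bar> + \<bar>z\<bar>" for u v w z :: real by arith
      show "\<bar>A * x + a x + B * \<rho> (P t * x + y) + b (\<rho> (P t * x + y))\<bar>
          \<le> \<bar>A\<bar> * \<bar>x\<bar> + Ma + \<bar>B\<bar> * \<bar>\<rho> (P t * x + y)\<bar> + Mb"
        using t4[of "A * x" "a x" "B * \<rho> (P t * x + y)" "b (\<rho> (P t * x + y))"]
          Ma(2)[of x] Mb(2)[of "\<rho> (P t * x + y)"] by (simp add: abs_mult)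
    qed
    also have "\<dots> \<le> \<bar>A\<bar> * \<bar>x\<bar> + Ma + \<bar>B\<bar> * (\<bar>\<rho> 0\<bar> + Lr * (Pm * \<bar>x\<bar> + \<bar>y\<bar>)) + Mb"
      using r by (simp add: mult_left_mono)
    also have "\<dots> = (Ma + Mb + \<bar>B\<bar> * \<bar>\<rho> 0\<bar>) + (\<bar>A\<bar> + \<bar>B\<bar> * Lr * Pm) * \<bar>x\<bar> + (\<bar>B\<bar> * Lr) * \<bar>y\<bar>"
      by (simp add: algebra_simps)
    also have "\<dots> \<le> Cd + Cd * \<bar>x\<bar> + Cd * \<bar>y\<bar>"
    proof -
      have "Ma + Mb + \<bar>B\<bar> * \<bar>\<rho> 0\<bar> \<le> Cd" unfolding Cd_def using Lr Pm0 by simp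
      moreover have "(\<bar>A\<bar> + \<bar>B\<bar> * Lr * Pm) * \<bar>x\<bar> \<le> Cd * \<bar>x\<bar>"
        unfolding Cd_def using Lr Pm0 Ma Mb by (intro mult_right_mono) auto
      moreover have "(\<bar>B\<bar> * Lr) * \<bar>y\<bar> \<le> Cd * \<bar>y\<bar>"
        unfolding Cd_def using Lr Pm0 Ma Mb by (intro mult_right_mono) auto
      ultimately show ?thesis by linarith
    qed
    finally show ?thesis by (simp add: algebra_simps)
  qed
  obtain Ft Fx Fxx where
    dF: "\<And>t x. t \<in> {0..<T} \<Longrightarrow> ((\<lambda>s. \<Phi> s x) has_real_derivative Ft t x) (at t within {0..T})
        \<and> ((\<lambda>y. \<Phi> t y) has_real_derivative Fx t x) (at x) \<and> ((\<lambda>y. Fx t y) has_real_derivative Fxx t x) (at x)"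
    and cF: "continuous_on ({0..T} \<times> UNIV) (\<lambda>p. \<Phi> (fst p) (snd p))"
    and b1: "bounded ((\<lambda>p. Fx (fst p) (snd p)) ` ({0..<T} \<times> UNIV))"
    and b2: "bounded ((\<lambda>p. Fxx (fst p) (snd p)) ` ({0..<T} \<times> UNIV))"
    and eqF: "\<And>t x. t \<in> {0..<T} \<Longrightarrow>
      Ft t x + Fx t x * dr t x (\<Phi> t x) + src t x (\<Phi> t x) + (0 + \<sigma>0\<^sup>2) / 2 * Fxx t x = 0"
    and TF: "\<And>x. \<Phi> T x = deriv g x / 2"
    using Phi unfolding pde_sol_def dr_def src_def by blast
  obtain M1 where M1: "M1 \<ge> 0" "\<And>t x. t \<in> {0..<T} \<Longrightarrow> \<bar>Fx t x\<bar> \<le> M1"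
    using bounded_img2[OF b1] by blast
  obtain M2 where M2: "M2 \<ge> 0" "\<And>t x. t \<in> {0..<T} \<Longrightarrow> \<bar>Fxx t x\<bar> \<le> M2"
    using bounded_img2[OF b2] by blast
  define K1 where "K1 = \<sigma>\<^sup>2 / 2 * M2 * (T + 1) * exp ((M1 * Lf + Ls) * T)"
  have K10: "K1 \<ge> 0" unfolding K1_def using M2 hT by simp
  have est: "\<bar>\<Phi> t x - \<Psi> N t x\<bar> \<le> K1 / real N" if N: "N \<ge> 1" and t: "t \<in> {0..T}" for N t x
  proof -
    have "\<bar>\<Phi> t x - \<Psi> N t x\<bar> \<le> (\<sigma>\<^sup>2 / real N) / 2 * M2 * (T + 1) * exp ((M1 * Lf + Ls) * T)"
      by (rule compare[OF hT _ dF cF M1(2) M2(2) eqF TF _ Lf0 Lfd Ls0 Lsd Cd0 Cdd t])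
        (use Psi[OF N] in \<open>auto simp: dr_def src_def\<close>)
    then show ?thesis unfolding K1_def by (simp add: field_simps)
  qed
  have fin: "(\<integral>\<^sup>+ \<omega>. (\<Squnion>t\<in>{0..T}. ennreal ((\<Phi> t (X t \<omega>) - \<Psi> N t (X t \<omega>))\<^sup>2)) \<partial>M)
        \<le> ennreal (K1\<^sup>2 / (real N)\<^sup>2)"
    if N: "N \<ge> 1" and PS: "prob_space M" for N :: nat and M :: "'a measure" and X :: "real \<Rightarrow> 'a \<Rightarrow> real"
  proof -
    have pw: "(\<Squnion>t\<in>{0..T}. ennreal ((\<Phi> t (X t \<omega>) - \<Psi> N t (X t \<omega>))\<^sup>2)) \<le> ennreal (K1\<^sup>2 / (real N)\<^sup>2)" for \<omega>
    proof (rule SUP_least)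
      fix t assume t: "t \<in> {0..T}"
      have e: "\<bar>\<Phi> t (X t \<omega>) - \<Psi> N t (X t \<omega>)\<bar> \<le> K1 / real N" by (rule est[OF N t])
      have "(\<Phi> t (X t \<omega>) - \<Psi> N t (X t \<omega>))\<^sup>2 = \<bar>\<Phi> t (X t \<omega>) - \<Psi> N t (X t \<omega>)\<bar>\<^sup>2" by simp
      also have "\<dots> \<le> (K1 / real N)\<^sup>2" by (rule power_mono[OF e]) simp
      also have "\<dots> = K1\<^sup>2 / (real N)\<^sup>2" by (simp add: power_divide)
      finally show "ennreal ((\<Phi> t (X t \<omega>) - \<Psi> N t (X t \<omega>))\<^sup>2) \<le> ennreal (K1\<^sup>2 / (real N)\<^sup>2)"
        by (rule ennreal_leI)
    qed
    have "(\<integral>\<^sup>+ \<omega>. (\<Squnion>t\<in>{0..T}. ennreal ((\<Phi> t (X t \<omega>) - \<Psi> N t (X t \<omega>))\<^sup>2)) \<partial>M)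
        \<le> (\<integral>\<^sup>+ \<omega>. ennreal (K1\<^sup>2 / (real N)\<^sup>2) \<partial>M)"
      by (rule nn_integral_mono) (rule pw)
    also have "\<dots> = ennreal (K1\<^sup>2 / (real N)\<^sup>2)"
      using prob_space.emeasure_space_1[OF PS] by simp
    finally show "(\<integral>\<^sup>+ \<omega>. (\<Squnion>t\<in>{0..T}. ennreal ((\<Phi> t (X t \<omega>) - \<Psi> N t (X t \<omega>))\<^sup>2)) \<partial>M)
        \<le> ennreal (K1\<^sup>2 / (real N)\<^sup>2)" .
  qed
  show ?thesis by (intro exI[of _ "K1\<^sup>2"] allI impI) (use fin in blast)
qed

end
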